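(* Let $(\mathcal G,\lambda)$ be a small morphism-colored groupoid satisfying the inverse-compatibility condition, and let $\bar I_0,\bar I_1,s_0,s_1,\lambda_0,\lambda_1$ be as in the context. Then the following data give a well-defined small groupoid $\mathcal U(\mathcal G,\lambda)$: its set of objects is $\bar I_0$ and its set of morphisms is $\bar I_1$; for $f\in\mathrm{Mor}(\mathcal G)$ the source of $(s_1\circ\lambda_1)(f)$ is $(s_0\circ\lambda_0)(\mathrm{source}(f))$ and its target is $(s_0\circ\lambda_0)(\mathrm{target}(f))$; and for every composable pair $(f,g)$ of morphisms of $\mathcal G$, $(s_1\circ\lambda_1)(f)\circ(s_1\circ\lambda_1)(g)=(s_1\circ\lambda_1)(f\circ g)$. (In particular, source and target depend only on the class $(s_1\circ\lambda_1)(f)$, every pair of elements $a,b\in\bar I_1$ with source of $a$ equal to target of $b$ is of the form $a=(s_1\circ\lambda_1)(f)$, $b=(s_1\circ\lambda_1)(g)$ with $(f,g)$ composable in $\mathcal G$, and the composite $a\circ b$ does not depend on that choice.)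
   Context: A morphism-colored category is a pair $(\mathcal C,\lambda)$ where $\mathcal C$ is a category and $\lambda$ assigns to each morphism $f$ of $\mathcal C$ a "color" $\lambda(f)$, such that: whenever $g,f_1,f_2\in\mathrm{Mor}(\mathcal C)$ with $(f_1,f_2)$ composable satisfy $\lambda(g)=\lambda(f_1\circ f_2)$, there exist composable $g_1,g_2\in\mathrm{Mor}(\mathcal C)$ with $g=g_1\circ g_2$, $\lambda(g_1)=\lambda(f_1)$, $\lambda(g_2)=\lambda(f_2)$. It is a morphism-colored groupoid if $\mathcal C$ is a groupoid, and small if $\mathcal C$ is small and $\lambda$ is a map from $\mathrm{Mor}(\mathcal C)$ to a set. Standing setup: $(\mathcal G,\lambda)$ is a small morphism-colored groupoid with $\lambda:\mathrm{Mor}(\mathcal G)\to I$, satisfying the inverse-compatibility condition: for all $f,g\in\mathrm{Mor}(\mathcal G)$, $\lambda(f)=\lambda(g)$ implies $\lambda(f^{-1})=\lambda(g^{-1})$. Let $I_1$ be the image of $\lambda$ and $\lambda_1:\mathrm{Mor}(\mathcal G)\to I_1$, $\lambda_1(f)=\lambda(f)$. Let $I_0=\{\lambda(\mathrm{id}_x): x\in\mathrm{Obj}(\mathcal G)\}$ and $\lambda_0:\mathrm{Obj}(\mathcal G)\to I_0$, $\lambda_0(x)=\lambda(\mathrm{id}_x)$. The relation $\overset{1}{\sim}$ on $I_1$: for every $l\ge1$ and every pair of composable sequences $(f_1,\dots,f_l)$, $(g_1,\dots,g_l)$ of morphisms of $\mathcal G$ with $\lambda(f_i)=\lambda(g_i)$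 for all $i$, declare $\lambda(f_1\circ\cdots\circ f_l)\overset{1}{\sim}\lambda(g_1\circ\cdots\circ g_l)$ (and no other pairs are related). This is an equivalence relation; $\bar I_1$ is the set of its classes and $s_1:I_1\to\bar I_1$ the quotient map. The relation $\overset{0}{\sim}$ on $I_0$: declare $\lambda_0(\mathrm{source}(f))\overset{0}{\sim}\lambda_0(\mathrm{source}(g))$ for all $f,g\in\mathrm{Mor}(\mathcal G)$ with $(s_1\circ\lambda_1)(f)=(s_1\circ\lambda_1)(g)$. This is an equivalence relation; $\bar I_0$ is the set of its classes and $s_0:I_0\to\bar I_0$ the quotient map. *)

theory Defs
  imports Main
begin

definition is_category ::
  "'o set \<Rightarrow> 'm set \<Rightarrow> ('m \<Rightarrow> 'o) \<Rightarrow> ('m \<Rightarrow> 'o) \<Rightarrow> ('m \<Rightarrow> 'm \<Rightarrow> 'm) \<Rightarrow> ('o \<Rightarrow> 'm) \<Rightarrow> bool"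
where
  "is_category Obj Mor src tgt cmp idt \<longleftrightarrow>
     (\<forall>f\<in>Mor. src f \<in> Obj \<and> tgt f \<in> Obj) \<and>
     (\<forall>x\<in>Obj. idt x \<in> Mor \<and> src (idt x) = x \<and> tgt (idt x) = x) \<and>
     (\<forall>f\<in>Mor. \<forall>g\<in>Mor. src f = tgt g \<longrightarrow>
         cmp f g \<in> Mor \<and> src (cmp f g) = src g \<and> tgt (cmp f g) = tgt f) \<and>
     (\<forall>f\<in>Mor. \<forall>g\<in>Mor. \<forall>h\<in>Mor. src f = tgt g \<longrightarrow> src g = tgt h \<longrightarrow>
         cmp (cmp f g) h = cmp f (cmp g h)) \<and>
     (\<forall>f\<in>Mor. cmp (idt (tgt f)) f = f \<and> cmp f (idt (src f)) = f)"

definition is_groupoid ::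
  "'o set \<Rightarrow> 'm set \<Rightarrow> ('m \<Rightarrow> 'o) \<Rightarrow> ('m \<Rightarrow> 'o) \<Rightarrow> ('m \<Rightarrow> 'm \<Rightarrow> 'm) \<Rightarrow> ('o \<Rightarrow> 'm) \<Rightarrow> bool"
where
  "is_groupoid Obj Mor src tgt cmp idt \<longleftrightarrow>
     is_category Obj Mor src tgt cmp idt \<and>
     (\<forall>f\<in>Mor. \<exists>g\<in>Mor. src g = tgt f \<and> tgt g = src f \<and>
         cmp g f = idt (src f) \<and> cmp f g = idt (tgt f))"

definition ginv ::
  "'m set \<Rightarrow> ('m \<Rightarrow> 'o) \<Rightarrow> ('m \<Rightarrow> 'o) \<Rightarrow> ('m \<Rightarrow> 'm \<Rightarrow> 'm) \<Rightarrow> ('o \<Rightarrow> 'm) \<Rightarrow> 'm \<Rightarrow> 'm"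
where
  "ginv Mor src tgt cmp idt f = (SOME g. g \<in> Mor \<and> src g = tgt f \<and> tgt g = src f \<and>
         cmp g f = idt (src f) \<and> cmp f g = idt (tgt f))"

definition morphism_colored ::
  "'m set \<Rightarrow> ('m \<Rightarrow> 'o) \<Rightarrow> ('m \<Rightarrow> 'o) \<Rightarrow> ('m \<Rightarrow> 'm \<Rightarrow> 'm) \<Rightarrow> ('m \<Rightarrow> 'i) \<Rightarrow> bool"
where
  "morphism_colored Mor src tgt cmp lam \<longleftrightarrow>
     (\<forall>g\<in>Mor. \<forall>f1\<in>Mor. \<forall>f2\<in>Mor. src f1 = tgt f2 \<longrightarrow> lam g = lam (cmp f1 f2) \<longrightarrow>
        (\<exists>g1\<in>Mor. \<exists>g2\<in>Mor. src g1 = tgt g2 \<and> g = cmp g1 g2 \<and>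
            lam g1 = lam f1 \<and> lam g2 = lam f2))"

definition inverse_compatible ::
  "'m set \<Rightarrow> ('m \<Rightarrow> 'o) \<Rightarrow> ('m \<Rightarrow> 'o) \<Rightarrow> ('m \<Rightarrow> 'm \<Rightarrow> 'm) \<Rightarrow> ('o \<Rightarrow> 'm) \<Rightarrow> ('m \<Rightarrow> 'i) \<Rightarrow> bool"
where
  "inverse_compatible Mor src tgt cmp idt lam \<longleftrightarrow>
     (\<forall>f\<in>Mor. \<forall>g\<in>Mor. lam f = lam g \<longrightarrow>
        lam (ginv Mor src tgt cmp idt f) = lam (ginv Mor src tgt cmp idt g))"

definition composable_seq :: "'m set \<Rightarrow> ('m \<Rightarrow> 'o) \<Rightarrow> ('m \<Rightarrow> 'o) \<Rightarrow> 'm list \<Rightarrow> bool" where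
  "composable_seq Mor src tgt fs \<longleftrightarrow> fs \<noteq> [] \<and> set fs \<subseteq> Mor \<and>
     (\<forall>i. Suc i < length fs \<longrightarrow> src (fs ! i) = tgt (fs ! Suc i))"

fun comp_seq :: "('m \<Rightarrow> 'm \<Rightarrow> 'm) \<Rightarrow> 'm list \<Rightarrow> 'm" where
  "comp_seq cmp [] = undefined"
| "comp_seq cmp [f] = f"
| "comp_seq cmp (f # g # fs) = cmp f (comp_seq cmp (g # fs))"

text \<open>The relation ~1 on I_1 (exactly the generating pairs, as in the paper).\<close>
definition rel1 ::
  "'m set \<Rightarrow> ('m \<Rightarrow> 'o) \<Rightarrow> ('m \<Rightarrow> 'o) \<Rightarrow> ('m \<Rightarrow> 'm \<Rightarrow> 'm) \<Rightarrow> ('m \<Rightarrow> 'i) \<Rightarrow> ('i \<times> 'i) set"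
where
  "rel1 Mor src tgt cmp lam =
     {(lam (comp_seq cmp fs), lam (comp_seq cmp gs)) | fs gs.
        composable_seq Mor src tgt fs \<and> composable_seq Mor src tgt gs \<and>
        length fs = length gs \<and> (\<forall>i < length fs. lam (fs ! i) = lam (gs ! i))}"

definition I1 :: "'m set \<Rightarrow> ('m \<Rightarrow> 'i) \<Rightarrow> 'i set" where
  "I1 Mor lam = lam ` Mor"

definition Ibar1 ::
  "'m set \<Rightarrow> ('m \<Rightarrow> 'o) \<Rightarrow> ('m \<Rightarrow> 'o) \<Rightarrow> ('m \<Rightarrow> 'm \<Rightarrow> 'm) \<Rightarrow> ('m \<Rightarrow> 'i) \<Rightarrow> 'i set set"
where
  "Ibar1 Mor src tgt cmp lam = I1 Mor lam // rel1 Mor src tgt cmp lam"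

definition s1 ::
  "'m set \<Rightarrow> ('m \<Rightarrow> 'o) \<Rightarrow> ('m \<Rightarrow> 'o) \<Rightarrow> ('m \<Rightarrow> 'm \<Rightarrow> 'm) \<Rightarrow> ('m \<Rightarrow> 'i) \<Rightarrow> 'i \<Rightarrow> 'i set"
where
  "s1 Mor src tgt cmp lam a = rel1 Mor src tgt cmp lam `` {a}"

definition lam0 :: "('o \<Rightarrow> 'm) \<Rightarrow> ('m \<Rightarrow> 'i) \<Rightarrow> 'o \<Rightarrow> 'i" where
  "lam0 idt lam x = lam (idt x)"

definition I0 :: "'o set \<Rightarrow> ('o \<Rightarrow> 'm) \<Rightarrow> ('m \<Rightarrow> 'i) \<Rightarrow> 'i set" where
  "I0 Obj idt lam = lam0 idt lam ` Obj"

text \<open>The relation ~0 on I_0 (exactly the generating pairs, as in the paper).\<close>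
definition rel0 ::
  "'m set \<Rightarrow> ('m \<Rightarrow> 'o) \<Rightarrow> ('m \<Rightarrow> 'o) \<Rightarrow> ('m \<Rightarrow> 'm \<Rightarrow> 'm) \<Rightarrow> ('o \<Rightarrow> 'm) \<Rightarrow> ('m \<Rightarrow> 'i) \<Rightarrow> ('i \<times> 'i) set"
where
  "rel0 Mor src tgt cmp idt lam =
     {(lam0 idt lam (src f), lam0 idt lam (src g)) | f g.
        f \<in> Mor \<and> g \<in> Mor \<and>
        s1 Mor src tgt cmp lam (lam f) = s1 Mor src tgt cmp lam (lam g)}"

definition Ibar0 ::
  "'o set \<Rightarrow> 'm set \<Rightarrow> ('m \<Rightarrow> 'o) \<Rightarrow> ('m \<Rightarrow> 'o) \<Rightarrow> ('m \<Rightarrow> 'm \<Rightarrow> 'm) \<Rightarrow> ('o \<Rightarrow> 'm) \<Rightarrow> ('m \<Rightarrow> 'i) \<Rightarrow> 'i set set"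
where
  "Ibar0 Obj Mor src tgt cmp idt lam = I0 Obj idt lam // rel0 Mor src tgt cmp idt lam"

definition s0 ::
  "'m set \<Rightarrow> ('m \<Rightarrow> 'o) \<Rightarrow> ('m \<Rightarrow> 'o) \<Rightarrow> ('m \<Rightarrow> 'm \<Rightarrow> 'm) \<Rightarrow> ('o \<Rightarrow> 'm) \<Rightarrow> ('m \<Rightarrow> 'i) \<Rightarrow> 'i \<Rightarrow> 'i set"
where
  "s0 Mor src tgt cmp idt lam a = rel0 Mor src tgt cmp idt lam `` {a}"

end

theory Submission
  imports Defs
begin

locale CG =
  fixes Obj :: "'o set" and Mor :: "'m set"
    and src tgt :: "'m \<Rightarrow> 'o" and cmp :: "'m \<Rightarrow> 'm \<Rightarrow> 'm" and idt :: "'o \<Rightarrow> 'm"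
    and lam :: "'m \<Rightarrow> 'i"
  assumes grpd: "is_groupoid Obj Mor src tgt cmp idt"
    and colored: "morphism_colored Mor src tgt cmp lam"
    and invc: "inverse_compatible Mor src tgt cmp idt lam"
begin

lemma src_in: "f \<in> Mor \<Longrightarrow> src f \<in> Obj" and tgt_in: "f \<in> Mor \<Longrightarrow> tgt f \<in> Obj"
  using grpd unfolding is_groupoid_def is_category_def by auto
lemma idt_in: "x \<in> Obj \<Longrightarrow> idt x \<in> Mor" and idt_src: "x \<in> Obj \<Longrightarrow> src (idt x) = x"
  and idt_tgt: "x \<in> Obj \<Longrightarrow> tgt (idt x) = x"
  using grpd unfolding is_groupoid_def is_category_def by auto
lemma cmp_in: "f \<in> Mor \<Longrightarrow> g \<in> Mor \<Longrightarrow> src f = tgt g \<Longrightarrow> cmp f g \<in> Mor"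
  and cmp_src: "f \<in> Mor \<Longrightarrow> g \<in> Mor \<Longrightarrow> src f = tgt g \<Longrightarrow> src (cmp f g) = src g"
  and cmp_tgt: "f \<in> Mor \<Longrightarrow> g \<in> Mor \<Longrightarrow> src f = tgt g \<Longrightarrow> tgt (cmp f g) = tgt f"
  using grpd unfolding is_groupoid_def is_category_def by auto
lemma assoc: "f \<in> Mor \<Longrightarrow> g \<in> Mor \<Longrightarrow> h \<in> Mor \<Longrightarrow> src f = tgt g \<Longrightarrow> src g = tgt h \<Longrightarrow>
   cmp (cmp f g) h = cmp f (cmp g h)"
  using grpd unfolding is_groupoid_def is_category_def by auto
lemma idl: "f \<in> Mor \<Longrightarrow> cmp (idt (tgt f)) f = f" and idr: "f \<in> Mor \<Longrightarrow> cmp f (idt (src f)) = f"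
  using grpd unfolding is_groupoid_def is_category_def by auto

abbreviation "gi \<equiv> ginv Mor src tgt cmp idt"

lemma ginv_props: assumes "f \<in> Mor"
  shows "gi f \<in> Mor \<and> src (gi f) = tgt f \<and> tgt (gi f) = src f \<and>
         cmp (gi f) f = idt (src f) \<and> cmp f (gi f) = idt (tgt f)"
proof -
  have "\<exists>g. g \<in> Mor \<and> src g = tgt f \<and> tgt g = src f \<and>
         cmp g f = idt (src f) \<and> cmp f g = idt (tgt f)"
    using grpd assms unfolding is_groupoid_def by blast
  then show ?thesis unfolding ginv_def by (rule someI_ex)
qed

lemma gi_in: "f \<in> Mor \<Longrightarrow> gi f \<in> Mor" using ginv_props by blast
lemma gi_src: "f \<in> Mor \<Longrightarrow> src (gi f) = tgt f" using ginv_props by blast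
lemma gi_tgt: "f \<in> Mor \<Longrightarrow> tgt (gi f) = src f" using ginv_props by blast
lemma gi_l: "f \<in> Mor \<Longrightarrow> cmp (gi f) f = idt (src f)" using ginv_props by blast
lemma gi_r: "f \<in> Mor \<Longrightarrow> cmp f (gi f) = idt (tgt f)" using ginv_props by blast

lemma gi_gi: assumes f: "f \<in> Mor" shows "gi (gi f) = f"
proof -
  let ?g = "gi f" let ?h = "gi ?g"
  have g: "?g \<in> Mor" using gi_in f .
  have h: "?h \<in> Mor" using gi_in g .
  have "?h = cmp ?h (idt (tgt ?g))" using idr[OF h] gi_src[OF g] by simp
  also have "\<dots> = cmp ?h (cmp ?g f)" using gi_l[OF f] gi_tgt[OF f] by simp
  also have "\<dots> = cmp (cmp ?h ?g) f"
    using assoc[OF h g f] gi_src[OF g] gi_src[OF f] gi_tgt[OF f] by simp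
  also have "\<dots> = cmp (idt (tgt f)) f" using gi_l[OF g] gi_src[OF f] by simp
  also have "\<dots> = f" using idl[OF f] .
  finally show ?thesis by simp
qed

lemma lam_gi: "f \<in> Mor \<Longrightarrow> g \<in> Mor \<Longrightarrow> lam f = lam g \<Longrightarrow> lam (gi f) = lam (gi g)"
  using invc unfolding inverse_compatible_def by blast

lemma col: "g \<in> Mor \<Longrightarrow> f1 \<in> Mor \<Longrightarrow> f2 \<in> Mor \<Longrightarrow> src f1 = tgt f2 \<Longrightarrow> lam g = lam (cmp f1 f2) \<Longrightarrow>
   \<exists>g1\<in>Mor. \<exists>g2\<in>Mor. src g1 = tgt g2 \<and> g = cmp g1 g2 \<and> lam g1 = lam f1 \<and> lam g2 = lam f2"
  using colored unfolding morphism_colored_def by blast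

fun cs :: "'m list \<Rightarrow> bool" where
  "cs [] = False"
| "cs [f] = (f \<in> Mor)"
| "cs (f # g # r) = (f \<in> Mor \<and> src f = tgt g \<and> cs (g # r))"

lemma cs_eq: "composable_seq Mor src tgt xs = cs xs"
proof (induction xs rule: cs.induct)
  case 1 then show ?case by (simp add: composable_seq_def)
next
  case (2 f) then show ?case by (simp add: composable_seq_def)
next
  case (3 f g r)
  have "(\<forall>i. Suc i < length (f # g # r) \<longrightarrow> src ((f # g # r) ! i) = tgt ((f # g # r) ! Suc i))
     \<longleftrightarrow> src f = tgt g \<and> (\<forall>i. Suc i < length (g # r) \<longrightarrow> src ((g # r) ! i) = tgt ((g # r) ! Suc i))"
    (is "?L \<longleftrightarrow> ?R")
  proof
    assume L: ?L
    show ?R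
    proof
      show "src f = tgt g" using L[rule_format, of 0] by simp
      show "\<forall>i. Suc i < length (g # r) \<longrightarrow> src ((g # r) ! i) = tgt ((g # r) ! Suc i)"
        using L by (metis Suc_less_eq length_Cons nth_Cons_Suc)
    qed
  next
    assume R: ?R
    show ?L
    proof (intro allI impI)
      fix i assume "Suc i < length (f # g # r)"
      then show "src ((f # g # r) ! i) = tgt ((f # g # r) ! Suc i)"
        using R by (cases i) auto
    qed
  qed
  then show ?case using 3 by (auto simp: composable_seq_def)
qed

lemma cs_props: "cs xs \<Longrightarrow> comp_seq cmp xs \<in> Mor \<and> src (comp_seq cmp xs) = src (last xs)
   \<and> tgt (comp_seq cmp xs) = tgt (hd xs)"
proof (induction xs rule: cs.induct)
  case (3 f g r)
  then show ?case using cmp_in cmp_src cmp_tgt by auto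
qed auto

lemma cs_ne: "cs xs \<Longrightarrow> xs \<noteq> []" by auto

lemma cs_set: "cs xs \<Longrightarrow> set xs \<subseteq> Mor"
  by (induction xs rule: cs.induct) auto

lemma cs_hd: "cs xs \<Longrightarrow> hd xs \<in> Mor" using cs_set cs_ne by (metis hd_in_set subsetD)
lemma cs_last: "cs xs \<Longrightarrow> last xs \<in> Mor" using cs_set cs_ne by (metis last_in_set subsetD)

lemma cs_app: "cs xs \<Longrightarrow> cs ys \<Longrightarrow> src (last xs) = tgt (hd ys) \<Longrightarrow>
   cs (xs @ ys) \<and> comp_seq cmp (xs @ ys) = cmp (comp_seq cmp xs) (comp_seq cmp ys)"
proof (induction xs rule: cs.induct)
  case (2 f)
  then show ?case by (cases ys) auto
next
  case (3 f g r)
  have IH: "cs ((g # r) @ ys) \<and> comp_seq cmp ((g # r) @ ys) = cmp (comp_seq cmp (g # r)) (comp_seq cmp ys)"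
    using 3 by auto
  have P1: "comp_seq cmp (g # r) \<in> Mor" "tgt (comp_seq cmp (g # r)) = tgt g"
    "src (comp_seq cmp (g # r)) = src (last (g#r))"
    using cs_props 3 by auto
  have P2: "comp_seq cmp ys \<in> Mor" "tgt (comp_seq cmp ys) = tgt (hd ys)" using cs_props 3 by auto
  have "cs (f # g # (r @ ys))" using IH 3 by simp
  moreover have "comp_seq cmp (f # g # (r @ ys)) = cmp (cmp f (comp_seq cmp (g # r))) (comp_seq cmp ys)"
    using IH assoc[of f "comp_seq cmp (g # r)" "comp_seq cmp ys"] P1 P2 3 by simp
  ultimately show ?case by simp
qed auto

lemma lift: "cs fs \<Longrightarrow> g \<in> Mor \<Longrightarrow> lam g = lam (comp_seq cmp fs) \<Longrightarrow>
   \<exists>gs. cs gs \<and> map lam gs = map lam fs \<and> comp_seq cmp gs = g"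
proof (induction fs arbitrary: g rule: cs.induct)
  case (2 f)
  then show ?case by (intro exI[of _ "[g]"]) auto
next
  case (3 f f2 r)
  have P: "comp_seq cmp (f2 # r) \<in> Mor" "tgt (comp_seq cmp (f2 # r)) = tgt f2" using cs_props 3 by auto
  obtain g1 g2 where g: "g1 \<in> Mor" "g2 \<in> Mor" "src g1 = tgt g2" "g = cmp g1 g2" "lam g1 = lam f"
    "lam g2 = lam (comp_seq cmp (f2 # r))"
    using col[of g f "comp_seq cmp (f2 # r)"] 3 P by auto
  obtain gs where gs: "cs gs" "map lam gs = map lam (f2 # r)" "comp_seq cmp gs = g2"
    using 3(1)[of g2] 3(2) g by auto
  obtain x xs where xs: "gs = x # xs" using gs cs_ne by (cases gs) auto
  have "tgt g2 = tgt x" using cs_props[OF gs(1)] gs(3) xs by simp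
  then have "cs (g1 # gs)" using g gs xs by simp
  moreover have "comp_seq cmp (g1 # gs) = g" using xs gs g by simp
  moreover have "map lam (g1 # gs) = map lam (f # f2 # r)" using g gs by simp
  ultimately show ?case by blast
qed auto

abbreviation "R1 \<equiv> rel1 Mor src tgt cmp lam"
abbreviation "S1 \<equiv> s1 Mor src tgt cmp lam"

lemma map_eq_nth: "map lam xs = map lam ys \<longleftrightarrow> length xs = length ys \<and> (\<forall>i<length xs. lam (xs ! i) = lam (ys ! i))"
  by (auto simp: list_eq_iff_nth_eq)

lemma R1I: "cs fs \<Longrightarrow> cs gs \<Longrightarrow> map lam fs = map lam gs \<Longrightarrow>
   (lam (comp_seq cmp fs), lam (comp_seq cmp gs)) \<in> R1"
  unfolding rel1_def cs_eq map_eq_nth by blast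

lemma R1E: assumes "(a, b) \<in> R1"
  obtains fs gs where "cs fs" "cs gs" "map lam fs = map lam gs" "a = lam (comp_seq cmp fs)"
    "b = lam (comp_seq cmp gs)"
  using assms unfolding rel1_def cs_eq map_eq_nth by blast

lemma W: assumes p: "p \<in> Mor" and q: "q \<in> Mor" and f0: "f0 \<in> Mor" and pq: "lam p = lam q"
  and s: "src f0 = tgt p"
  shows "\<exists>f\<in>Mor. lam f = lam f0 \<and> src f = tgt q"
proof -
  let ?fi = "gi f0"
  have fi: "?fi \<in> Mor" using gi_in f0 .
  have c: "cmp f0 p \<in> Mor" using cmp_in f0 p s by blast
  have "cmp ?fi (cmp f0 p) = cmp (cmp ?fi f0) p"
    using assoc[OF fi f0 p] gi_src[OF f0] s by simp
  also have "\<dots> = p" using gi_l[OF f0] s idl[OF p] by simp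
  finally have e: "cmp ?fi (cmp f0 p) = p" .
  have "src ?fi = tgt (cmp f0 p)" using gi_src[OF f0] cmp_tgt[OF f0 p s] by simp
  moreover have "lam q = lam (cmp ?fi (cmp f0 p))" using e pq by simp
  ultimately obtain w1 w2 where w: "w1 \<in> Mor" "w2 \<in> Mor" "src w1 = tgt w2" "q = cmp w1 w2" "lam w1 = lam ?fi"
    using col[OF q fi c] by blast
  have "tgt q = tgt w1" using w cmp_tgt by simp
  moreover have "lam (gi w1) = lam f0" using lam_gi[OF w(1) fi w(5)] gi_gi[OF f0] by simp
  ultimately show ?thesis using gi_in[OF w(1)] gi_src[OF w(1)] by metis
qed

lemma Wsrc: assumes p: "p \<in> Mor" and q: "q \<in> Mor" and f0: "f0 \<in> Mor" and pq: "lam p = lam q"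
  and s: "src f0 = src p"
  shows "\<exists>f\<in>Mor. lam f = lam f0 \<and> src f = src q"
  using W[OF gi_in[OF p] gi_in[OF q] f0 lam_gi[OF p q pq]] s gi_tgt p q by simp

lemma Wtgt: assumes p: "p \<in> Mor" and q: "q \<in> Mor" and g0: "g0 \<in> Mor" and pq: "lam p = lam q"
  and s: "tgt g0 = tgt p"
  shows "\<exists>g\<in>Mor. lam g = lam g0 \<and> tgt g = tgt q"
proof -
  obtain f where f: "f \<in> Mor" "lam f = lam (gi g0)" "src f = tgt q"
    using W[OF p q gi_in[OF g0] pq] gi_src[OF g0] s by auto
  have "lam (gi f) = lam g0" using lam_gi[OF f(1) gi_in[OF g0] f(2)] gi_gi[OF g0] by simp
  then show ?thesis using gi_in[OF f(1)] gi_tgt[OF f(1)] f(3) by metis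
qed

lemma hd_col: "map lam xs = map lam ys \<Longrightarrow> xs \<noteq> [] \<Longrightarrow> lam (hd xs) = lam (hd ys)"
  by (cases xs; cases ys) auto
lemma last_col: "map lam xs = map lam ys \<Longrightarrow> xs \<noteq> [] \<Longrightarrow> lam (last xs) = lam (last ys)"
  by (metis last_map list.map_disc_iff)

lemma R1_trans: assumes ab: "(a, b) \<in> R1" and bc: "(b, c) \<in> R1" shows "(a, c) \<in> R1"
proof -
  obtain fs gs where fg: "cs fs" "cs gs" "map lam fs = map lam gs" "a = lam (comp_seq cmp fs)"
    "b = lam (comp_seq cmp gs)" using ab by (rule R1E)
  obtain hs ks where hk: "cs hs" "cs ks" "map lam hs = map lam ks" "b = lam (comp_seq cmp hs)"
    "c = lam (comp_seq cmp ks)" using bc by (rule R1E)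
  define F where "F = comp_seq cmp fs"
  define G where "G = comp_seq cmp gs"
  define H0 where "H0 = comp_seq cmp hs"
  define K where "K = comp_seq cmp ks"
  note pF = cs_props[OF fg(1), folded F_def]
  note pG = cs_props[OF fg(2), folded G_def]
  note pH = cs_props[OF hk(1), folded H0_def]
  note pK = cs_props[OF hk(2), folded K_def]
  have hdF: "hd fs \<in> Mor" "hd gs \<in> Mor" using cs_hd fg by auto
  have lastH: "last hs \<in> Mor" "last ks \<in> Mor" using cs_last hk by auto
  obtain P where P: "P \<in> Mor" "lam P = lam G" "tgt P = tgt (hd fs)"
    using Wtgt[OF hdF(2) hdF(1) pG[THEN conjunct1]] hd_col[OF fg(3)[symmetric]] cs_ne[OF fg(2)] pG by auto
  obtain ps where ps: "cs ps" "map lam ps = map lam hs" "comp_seq cmp ps = P"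
    using lift[OF hk(1) P(1)] P(2) fg(5) hk(4) G_def by auto
  obtain H where H: "H \<in> Mor" "lam H = lam H0" "src H = src (last ks)"
    using Wsrc[OF lastH pH[THEN conjunct1]] last_col[OF hk(3)] cs_ne[OF hk(1)] pH by auto
  obtain hs2 where hs2: "cs hs2" "map lam hs2 = map lam gs" "comp_seq cmp hs2 = H"
    using lift[OF fg(2) H(1)] H(2) fg(5) hk(4) H0_def by auto
  have psP: "src (last ps) = src P" "tgt (hd hs2) = tgt H" using cs_props ps hs2 by auto
  have giP: "gi P \<in> Mor" "src (gi P) = tgt P" "tgt (gi P) = src P" using gi_in gi_src gi_tgt P(1) by auto
  have giH: "gi H \<in> Mor" "src (gi H) = tgt H" "tgt (gi H) = src H" using gi_in gi_src gi_tgt H(1) by auto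
  have X1: "cs ([gi P] @ fs) \<and> comp_seq cmp ([gi P] @ fs) = cmp (gi P) F"
    using cs_app[of "[gi P]" fs] giP fg(1) P(3) F_def by simp
  have X2: "cs (ps @ ([gi P] @ fs)) \<and> comp_seq cmp (ps @ ([gi P] @ fs)) = cmp P (cmp (gi P) F)"
    using cs_app[of ps "[gi P] @ fs"] X1 ps psP giP by simp
  have "cmp P (cmp (gi P) F) = cmp (cmp P (gi P)) F"
    using assoc[OF P(1) giP(1)] pF giP P by simp
  also have "\<dots> = F" using gi_r[OF P(1)] P(3) pF idl[OF pF[THEN conjunct1]] by simp
  finally have X3: "comp_seq cmp (ps @ ([gi P] @ fs)) = F" using X2 by simp
  have Y1: "cs ([gi H] @ hs2) \<and> comp_seq cmp ([gi H] @ hs2) = cmp (gi H) H"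
    using cs_app[of "[gi H]" hs2] giH hs2 psP by simp
  have Y2: "cs (ks @ ([gi H] @ hs2)) \<and> comp_seq cmp (ks @ ([gi H] @ hs2)) = cmp K (cmp (gi H) H)"
    using cs_app[of ks "[gi H] @ hs2"] Y1 hk(2) giH H K_def by simp
  have "cmp K (cmp (gi H) H) = K" using gi_l[OF H(1)] H(3) pK idr[OF pK[THEN conjunct1]] by simp
  then have Y3: "comp_seq cmp (ks @ ([gi H] @ hs2)) = K" using Y2 by simp
  have "lam (gi P) = lam (gi H)" using lam_gi[OF P(1) H(1)] P(2) H(2) G_def H0_def fg(5) hk(4) by simp
  then have "map lam (ps @ ([gi P] @ fs)) = map lam (ks @ ([gi H] @ hs2))"
    using ps(2) hk(3) fg(3) hs2(2) by simp
  from R1I[OF X2[THEN conjunct1] Y2[THEN conjunct1] this] X3 Y3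
  show ?thesis using fg(4) hk(5) F_def K_def by simp
qed

lemma R1_equiv: "equiv (I1 Mor lam) R1"
proof (rule equivI)
  show "R1 \<subseteq> I1 Mor lam \<times> I1 Mor lam"
  proof
    fix x assume "x \<in> R1"
    then obtain a b where ab: "x = (a, b)" "(a,b) \<in> R1" by (cases x) auto
    from ab(2) obtain fs gs where "cs fs" "cs gs" "a = lam (comp_seq cmp fs)" "b = lam (comp_seq cmp gs)"
      by (rule R1E)
    then show "x \<in> I1 Mor lam \<times> I1 Mor lam" using ab cs_props unfolding I1_def by auto
  qed
next
  show "refl_on (I1 Mor lam) R1"
  proof (rule refl_onI)
    fix a assume "a \<in> I1 Mor lam"
    then obtain f where "f \<in> Mor" "a = lam f" unfolding I1_def by auto
    then show "(a, a) \<in> R1" using R1I[of "[f]" "[f]"] by simp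
  qed
next
  show "sym R1"
  proof (rule symI)
    fix a b assume "(a, b) \<in> R1"
    then obtain fs gs where "cs fs" "cs gs" "map lam fs = map lam gs" "a = lam (comp_seq cmp fs)"
      "b = lam (comp_seq cmp gs)" by (rule R1E)
    then show "(b, a) \<in> R1" using R1I[of gs fs] by simp
  qed
next
  show "trans R1" by (rule transI) (rule R1_trans)
qed

lemma S1_eq: "f \<in> Mor \<Longrightarrow> g \<in> Mor \<Longrightarrow> S1 (lam f) = S1 (lam g) \<longleftrightarrow> (lam f, lam g) \<in> R1"
  using equiv_class_eq_iff[OF R1_equiv, of "lam f" "lam g"] unfolding s1_def I1_def by auto

lemma V_src: assumes f: "f \<in> Mor" and g: "g \<in> Mor" and e: "lam f = lam g"
  shows "(lam (idt (src f)), lam (idt (src g))) \<in> R1"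
proof -
  have "cs [gi f, f]" "cs [gi g, g]" using gi_in gi_src f g by auto
  moreover have "map lam [gi f, f] = map lam [gi g, g]" using lam_gi[OF f g e] e by simp
  ultimately have "(lam (comp_seq cmp [gi f, f]), lam (comp_seq cmp [gi g, g])) \<in> R1" by (rule R1I)
  then show ?thesis using gi_l[OF f] gi_l[OF g] by simp
qed

lemma V_tgt: assumes f: "f \<in> Mor" and g: "g \<in> Mor" and e: "lam f = lam g"
  shows "(lam (idt (tgt f)), lam (idt (tgt g))) \<in> R1"
proof -
  have "cs [f, gi f]" "cs [g, gi g]" using gi_in gi_tgt f g by auto
  moreover have "map lam [f, gi f] = map lam [g, gi g]" using lam_gi[OF f g e] e by simp
  ultimately have "(lam (comp_seq cmp [f, gi f]), lam (comp_seq cmp [g, gi g])) \<in> R1" by (rule R1I)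
  then show ?thesis using gi_r[OF f] gi_r[OF g] by simp
qed

lemma class_src: assumes f: "f \<in> Mor" and g: "g \<in> Mor" and e: "S1 (lam f) = S1 (lam g)"
  shows "S1 (lam (idt (src f))) = S1 (lam (idt (src g)))"
proof -
  have "(lam f, lam g) \<in> R1" using S1_eq f g e by simp
  then obtain fs gs where fg: "cs fs" "cs gs" "map lam fs = map lam gs" "lam f = lam (comp_seq cmp fs)"
    "lam g = lam (comp_seq cmp gs)" by (rule R1E)
  note pF = cs_props[OF fg(1)] note pG = cs_props[OF fg(2)]
  have l: "last fs \<in> Mor" "last gs \<in> Mor" using cs_last fg by auto
  have 1: "(lam (idt (src f)), lam (idt (src (last fs)))) \<in> R1"
    using V_src[OF f pF[THEN conjunct1]] fg(4) pF by simp
  have 2: "(lam (idt (src (last fs))), lam (idt (src (last gs)))) \<in> R1"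
    using V_src[OF l] last_col[OF fg(3)] cs_ne[OF fg(1)] by simp
  have 3: "(lam (idt (src (last gs))), lam (idt (src g))) \<in> R1"
    using V_src[OF pG[THEN conjunct1] g] fg(5) pG by simp
  have "(lam (idt (src f)), lam (idt (src g))) \<in> R1" using 1 2 3 R1_trans by blast
  then show ?thesis using S1_eq[OF idt_in[OF src_in[OF f]] idt_in[OF src_in[OF g]]] by simp
qed

lemma class_tgt: assumes f: "f \<in> Mor" and g: "g \<in> Mor" and e: "S1 (lam f) = S1 (lam g)"
  shows "S1 (lam (idt (tgt f))) = S1 (lam (idt (tgt g)))"
proof -
  have "(lam f, lam g) \<in> R1" using S1_eq f g e by simp
  then obtain fs gs where fg: "cs fs" "cs gs" "map lam fs = map lam gs" "lam f = lam (comp_seq cmp fs)"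
    "lam g = lam (comp_seq cmp gs)" by (rule R1E)
  note pF = cs_props[OF fg(1)] note pG = cs_props[OF fg(2)]
  have l: "hd fs \<in> Mor" "hd gs \<in> Mor" using cs_hd fg by auto
  have 1: "(lam (idt (tgt f)), lam (idt (tgt (hd fs)))) \<in> R1"
    using V_tgt[OF f pF[THEN conjunct1]] fg(4) pF by simp
  have 2: "(lam (idt (tgt (hd fs))), lam (idt (tgt (hd gs)))) \<in> R1"
    using V_tgt[OF l] hd_col[OF fg(3)] cs_ne[OF fg(1)] by simp
  have 3: "(lam (idt (tgt (hd gs))), lam (idt (tgt g))) \<in> R1"
    using V_tgt[OF pG[THEN conjunct1] g] fg(5) pG by simp
  have "(lam (idt (tgt f)), lam (idt (tgt g))) \<in> R1" using 1 2 3 R1_trans by blast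
  then show ?thesis using S1_eq[OF idt_in[OF tgt_in[OF f]] idt_in[OF tgt_in[OF g]]] by simp
qed

abbreviation "R0 \<equiv> rel0 Mor src tgt cmp idt lam"
abbreviation "S0 \<equiv> s0 Mor src tgt cmp idt lam"
abbreviation "II0 \<equiv> I0 Obj idt lam"

lemma R0_char: "R0 = {(a, b). a \<in> II0 \<and> b \<in> II0 \<and> S1 a = S1 b}"
proof
  show "R0 \<subseteq> {(a, b). a \<in> II0 \<and> b \<in> II0 \<and> S1 a = S1 b}"
  proof
    fix x assume "x \<in> R0"
    then obtain f g where fg: "x = (lam0 idt lam (src f), lam0 idt lam (src g))" "f \<in> Mor" "g \<in> Mor"
      "S1 (lam f) = S1 (lam g)" unfolding rel0_def by blast
    have "S1 (lam (idt (src f))) = S1 (lam (idt (src g)))" using class_src fg by blast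
    then show "x \<in> {(a, b). a \<in> II0 \<and> b \<in> II0 \<and> S1 a = S1 b}"
      using fg src_in unfolding I0_def lam0_def by auto
  qed
next
  show "{(a, b). a \<in> II0 \<and> b \<in> II0 \<and> S1 a = S1 b} \<subseteq> R0"
  proof
    fix x assume "x \<in> {(a, b). a \<in> II0 \<and> b \<in> II0 \<and> S1 a = S1 b}"
    then obtain u v where uv: "x = (lam (idt u), lam (idt v))" "u \<in> Obj" "v \<in> Obj"
      "S1 (lam (idt u)) = S1 (lam (idt v))" unfolding I0_def lam0_def by auto
    then have "x = (lam0 idt lam (src (idt u)), lam0 idt lam (src (idt v)))"
      using idt_src unfolding lam0_def by simp
    then show "x \<in> R0" unfolding rel0_def using uv idt_in by blast
  qed
qed

lemma R0_equiv: "equiv II0 R0"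
  unfolding R0_char by (rule equivI) (auto intro!: refl_onI symI transI)

lemma S0_eq: assumes "x \<in> Obj" "y \<in> Obj"
  shows "S0 (lam0 idt lam x) = S0 (lam0 idt lam y) \<longleftrightarrow> S1 (lam (idt x)) = S1 (lam (idt y))"
proof -
  have i: "lam0 idt lam x \<in> II0" "lam0 idt lam y \<in> II0" using assms unfolding I0_def by auto
  have "S0 (lam0 idt lam x) = S0 (lam0 idt lam y) \<longleftrightarrow> (lam0 idt lam x, lam0 idt lam y) \<in> R0"
    using equiv_class_eq_iff[OF R0_equiv] i unfolding s0_def by blast
  also have "\<dots> \<longleftrightarrow> S1 (lam (idt x)) = S1 (lam (idt y))" using i unfolding R0_char lam0_def by auto
  finally show ?thesis .
qed

lemma Xlem: assumes f0: "f0 \<in> Mor" and g0: "g0 \<in> Mor"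
  and e: "S1 (lam (idt (src f0))) = S1 (lam (idt (tgt g0)))"
  shows "\<exists>f\<in>Mor. lam f = lam f0 \<and> src f = tgt g0"
proof -
  let ?x = "src f0" let ?y = "tgt g0"
  have x: "?x \<in> Obj" and y: "?y \<in> Obj" using src_in f0 tgt_in g0 by auto
  have "(lam (idt ?x), lam (idt ?y)) \<in> R1" using S1_eq idt_in x y e by blast
  then obtain P Q where PQ: "cs P" "cs Q" "map lam P = map lam Q" "lam (idt ?x) = lam (comp_seq cmp P)"
    "lam (idt ?y) = lam (comp_seq cmp Q)" by (rule R1E)
  note pP = cs_props[OF PQ(1)] note pQ = cs_props[OF PQ(2)]
  obtain f1 where f1: "f1 \<in> Mor" "lam f1 = lam f0" "src f1 = tgt (comp_seq cmp P)"
    using W[OF idt_in[OF x] pP[THEN conjunct1] f0 PQ(4)] idt_tgt[OF x] by auto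
  obtain f2 where f2: "f2 \<in> Mor" "lam f2 = lam f0" "src f2 = tgt (hd Q)"
    using W[OF cs_hd[OF PQ(1)] cs_hd[OF PQ(2)] f1(1) hd_col[OF PQ(3) cs_ne[OF PQ(1)]]] f1 pP by auto
  obtain f3 where f3: "f3 \<in> Mor" "lam f3 = lam f0" "src f3 = ?y"
    using W[OF pQ[THEN conjunct1] idt_in[OF y] f2(1) PQ(5)[symmetric]] f2 pQ idt_tgt[OF y] by auto
  then show ?thesis by blast
qed

lemma comp_wd: assumes f: "f \<in> Mor" and f': "f' \<in> Mor" and g: "g \<in> Mor" and g': "g' \<in> Mor"
  and c: "src f = tgt g" and c': "src f' = tgt g'"
  and ef: "S1 (lam f) = S1 (lam f')" and eg: "S1 (lam g) = S1 (lam g')"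
  shows "S1 (lam (cmp f g)) = S1 (lam (cmp f' g'))"
proof -
  have "(lam f, lam f') \<in> R1" using S1_eq f f' ef by blast
  then obtain fs fs' where F: "cs fs" "cs fs'" "map lam fs = map lam fs'" "lam f = lam (comp_seq cmp fs)"
    "lam f' = lam (comp_seq cmp fs')" by (rule R1E)
  have "(lam g, lam g') \<in> R1" using S1_eq g g' eg by blast
  then obtain gs gs' where G: "cs gs" "cs gs'" "map lam gs = map lam gs'" "lam g = lam (comp_seq cmp gs)"
    "lam g' = lam (comp_seq cmp gs')" by (rule R1E)
  obtain a where a: "cs a" "map lam a = map lam fs" "comp_seq cmp a = f" using lift[OF F(1) f F(4)] by blast
  obtain a' where a': "cs a'" "map lam a' = map lam fs'" "comp_seq cmp a' = f'" using lift[OF F(2) f' F(5)] by blast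
  obtain b where b: "cs b" "map lam b = map lam gs" "comp_seq cmp b = g" using lift[OF G(1) g G(4)] by blast
  obtain b' where b': "cs b'" "map lam b' = map lam gs'" "comp_seq cmp b' = g'" using lift[OF G(2) g' G(5)] by blast
  have 1: "cs (a @ b) \<and> comp_seq cmp (a @ b) = cmp f g"
    using cs_app[OF a(1) b(1)] cs_props[OF a(1)] cs_props[OF b(1)] a b c by simp
  have 2: "cs (a' @ b') \<and> comp_seq cmp (a' @ b') = cmp f' g'"
    using cs_app[OF a'(1) b'(1)] cs_props[OF a'(1)] cs_props[OF b'(1)] a' b' c' by simp
  have "map lam (a @ b) = map lam (a' @ b')" using a a' b b' F(3) G(3) by simp
  from R1I[OF 1[THEN conjunct1] 2[THEN conjunct1] this] 1 2
  have "(lam (cmp f g), lam (cmp f' g')) \<in> R1" by simp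
  then show ?thesis using S1_eq cmp_in f f' g g' c c' by blast
qed

definition rep where "rep A = (SOME f. f \<in> Mor \<and> A = S1 (lam f))"
definition usrc where "usrc A = S0 (lam0 idt lam (src (rep A)))"
definition utgt where "utgt A = S0 (lam0 idt lam (tgt (rep A)))"
definition pr where "pr A B = (SOME p. fst p \<in> Mor \<and> snd p \<in> Mor \<and> src (fst p) = tgt (snd p)
   \<and> A = S1 (lam (fst p)) \<and> B = S1 (lam (snd p)))"
definition ucomp where "ucomp A B = S1 (lam (cmp (fst (pr A B)) (snd (pr A B))))"
definition uidt where "uidt X = S1 (lam (idt (SOME x. x \<in> Obj \<and> X = S0 (lam0 idt lam x))))"

lemma rep: assumes "f \<in> Mor" shows "rep (S1 (lam f)) \<in> Mor \<and> S1 (lam f) = S1 (lam (rep (S1 (lam f))))"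
  unfolding rep_def by (rule someI[of _ f]) (use assms in auto)

lemma usrc_eq: "f \<in> Mor \<Longrightarrow> usrc (S1 (lam f)) = S0 (lam0 idt lam (src f))"
  unfolding usrc_def using rep[of f] class_src[of "rep (S1 (lam f))" f] S0_eq src_in by metis

lemma utgt_eq: "f \<in> Mor \<Longrightarrow> utgt (S1 (lam f)) = S0 (lam0 idt lam (tgt f))"
  unfolding utgt_def using rep[of f] class_tgt[of "rep (S1 (lam f))" f] S0_eq tgt_in by metis

lemma ucomp_eq: assumes f: "f \<in> Mor" and g: "g \<in> Mor" and c: "src f = tgt g"
  shows "ucomp (S1 (lam f)) (S1 (lam g)) = S1 (lam (cmp f g))"
proof -
  let ?P = "\<lambda>p. fst p \<in> Mor \<and> snd p \<in> Mor \<and> src (fst p) = tgt (snd p)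
   \<and> S1 (lam f) = S1 (lam (fst p)) \<and> S1 (lam g) = S1 (lam (snd p))"
  have "?P (f, g)" using f g c by simp
  then have p: "?P (pr (S1 (lam f)) (S1 (lam g)))" unfolding pr_def by (rule someI)
  show ?thesis unfolding ucomp_def using comp_wd[OF _ f _ g _ c] p by metis
qed

lemma uidt_eq: assumes x: "x \<in> Obj" shows "uidt (S0 (lam0 idt lam x)) = S1 (lam (idt x))"
proof -
  let ?P = "\<lambda>y. y \<in> Obj \<and> S0 (lam0 idt lam x) = S0 (lam0 idt lam y)"
  have "?P x" using x by simp
  then have "?P (SOME y. ?P y)" by (rule someI)
  then show ?thesis unfolding uidt_def using S0_eq x by metis
qed

lemma Ibar1E: assumes "A \<in> Ibar1 Mor src tgt cmp lam" obtains f where "f \<in> Mor" "A = S1 (lam f)"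
  using assms unfolding Ibar1_def quotient_def I1_def s1_def by auto

lemma Ibar1I: "f \<in> Mor \<Longrightarrow> S1 (lam f) \<in> Ibar1 Mor src tgt cmp lam"
  unfolding Ibar1_def I1_def s1_def by (rule quotientI) auto

lemma Ibar0E: assumes "X \<in> Ibar0 Obj Mor src tgt cmp idt lam" obtains x where "x \<in> Obj" "X = S0 (lam0 idt lam x)"
  using assms unfolding Ibar0_def quotient_def I0_def s0_def by auto

lemma Ibar0I: "x \<in> Obj \<Longrightarrow> S0 (lam0 idt lam x) \<in> Ibar0 Obj Mor src tgt cmp idt lam"
  unfolding Ibar0_def I0_def s0_def by (rule quotientI) auto

lemma ex_left: assumes A: "A \<in> Ibar1 Mor src tgt cmp lam" and g: "g \<in> Mor"
  and e: "usrc A = S0 (lam0 idt lam (tgt g))"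
  shows "\<exists>f\<in>Mor. A = S1 (lam f) \<and> src f = tgt g"
proof -
  obtain f0 where f0: "f0 \<in> Mor" "A = S1 (lam f0)" using A by (rule Ibar1E)
  have "S0 (lam0 idt lam (src f0)) = S0 (lam0 idt lam (tgt g))" using e usrc_eq f0 by simp
  then have "S1 (lam (idt (src f0))) = S1 (lam (idt (tgt g)))" using S0_eq src_in tgt_in f0 g by blast
  then obtain f where "f \<in> Mor" "lam f = lam f0" "src f = tgt g" using Xlem f0 g by blast
  then show ?thesis using f0 by metis
qed

lemma U_groupoid: "is_groupoid (Ibar0 Obj Mor src tgt cmp idt lam) (Ibar1 Mor src tgt cmp lam) usrc utgt ucomp uidt"
  unfolding is_groupoid_def is_category_def
proof (intro conjI ballI impI)
  fix A assume "A \<in> Ibar1 Mor src tgt cmp lam"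
  then obtain f where f: "f \<in> Mor" "A = S1 (lam f)" by (rule Ibar1E)
  show "usrc A \<in> Ibar0 Obj Mor src tgt cmp idt lam" using f usrc_eq Ibar0I src_in by simp
  show "utgt A \<in> Ibar0 Obj Mor src tgt cmp idt lam" using f utgt_eq Ibar0I tgt_in by simp
next
  fix X assume "X \<in> Ibar0 Obj Mor src tgt cmp idt lam"
  then obtain x where x: "x \<in> Obj" "X = S0 (lam0 idt lam x)" by (rule Ibar0E)
  show "uidt X \<in> Ibar1 Mor src tgt cmp lam" using x uidt_eq Ibar1I idt_in by simp
  show "usrc (uidt X) = X" using x uidt_eq usrc_eq idt_in idt_src by simp
  show "utgt (uidt X) = X" using x uidt_eq utgt_eq idt_in idt_tgt by simp
next
  fix A B assume A: "A \<in> Ibar1 Mor src tgt cmp lam" and B: "B \<in> Ibar1 Mor src tgt cmp lam"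
    and e: "usrc A = utgt B"
  obtain g where g: "g \<in> Mor" "B = S1 (lam g)" using B by (rule Ibar1E)
  obtain f where f: "f \<in> Mor" "A = S1 (lam f)" "src f = tgt g" using ex_left[OF A g(1)] e g utgt_eq by auto
  have u: "ucomp A B = S1 (lam (cmp f g))" using ucomp_eq f g by simp
  show "ucomp A B \<in> Ibar1 Mor src tgt cmp lam" using u Ibar1I cmp_in f g by simp
  show "usrc (ucomp A B) = usrc B" using u usrc_eq cmp_in cmp_src f g by simp
  show "utgt (ucomp A B) = utgt A" using u utgt_eq cmp_in cmp_tgt f g by simp
next
  fix A B C assume A: "A \<in> Ibar1 Mor src tgt cmp lam" and B: "B \<in> Ibar1 Mor src tgt cmp lam"
    and C: "C \<in> Ibar1 Mor src tgt cmp lam" and e1: "usrc A = utgt B" and e2: "usrc B = utgt C"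
  obtain h where h: "h \<in> Mor" "C = S1 (lam h)" using C by (rule Ibar1E)
  obtain g where g: "g \<in> Mor" "B = S1 (lam g)" "src g = tgt h" using ex_left[OF B h(1)] e2 h utgt_eq by auto
  obtain f where f: "f \<in> Mor" "A = S1 (lam f)" "src f = tgt g" using ex_left[OF A g(1)] e1 g utgt_eq by auto
  have fg: "cmp f g \<in> Mor" "src (cmp f g) = tgt h" using cmp_in cmp_src f g by auto
  have gh: "cmp g h \<in> Mor" "tgt (cmp g h) = src f" using cmp_in cmp_tgt g h f by auto
  have "ucomp (ucomp A B) C = S1 (lam (cmp (cmp f g) h))" using ucomp_eq f g h fg by simp
  also have "\<dots> = S1 (lam (cmp f (cmp g h)))" using assoc f g h by simp
  also have "\<dots> = ucomp A (ucomp B C)" using ucomp_eq f g h gh by simp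
  finally show "ucomp (ucomp A B) C = ucomp A (ucomp B C)" .
next
  fix A assume "A \<in> Ibar1 Mor src tgt cmp lam"
  then obtain f where f: "f \<in> Mor" "A = S1 (lam f)" by (rule Ibar1E)
  have t: "tgt f \<in> Obj" and s: "src f \<in> Obj" using f src_in tgt_in by auto
  have "ucomp (uidt (utgt A)) A = ucomp (S1 (lam (idt (tgt f)))) (S1 (lam f))"
    using f utgt_eq uidt_eq t by simp
  also have "\<dots> = S1 (lam f)" using ucomp_eq[OF idt_in[OF t] f(1)] idt_src[OF t] idl f by simp
  finally show "ucomp (uidt (utgt A)) A = A" using f by simp
  have "ucomp A (uidt (usrc A)) = ucomp (S1 (lam f)) (S1 (lam (idt (src f))))"
    using f usrc_eq uidt_eq s by simp
  also have "\<dots> = S1 (lam f)" using ucomp_eq[OF f(1) idt_in[OF s]] idt_tgt[OF s] idr f by simp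
  finally show "ucomp A (uidt (usrc A)) = A" using f by simp
next
  fix A assume "A \<in> Ibar1 Mor src tgt cmp lam"
  then obtain f where f: "f \<in> Mor" "A = S1 (lam f)" by (rule Ibar1E)
  let ?B = "S1 (lam (gi f))"
  have gf: "gi f \<in> Mor" "src (gi f) = tgt f" "tgt (gi f) = src f" using gi_in gi_src gi_tgt f by auto
  have s: "src f \<in> Obj" "tgt f \<in> Obj" using f src_in tgt_in by auto
  show "\<exists>B\<in>Ibar1 Mor src tgt cmp lam. usrc B = utgt A \<and> utgt B = usrc A \<and>
          ucomp B A = uidt (usrc A) \<and> ucomp A B = uidt (utgt A)"
  proof (intro bexI conjI)
    show "?B \<in> Ibar1 Mor src tgt cmp lam" using Ibar1I gf by simp
    show "usrc ?B = utgt A" using usrc_eq utgt_eq gf f by simp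
    show "utgt ?B = usrc A" using usrc_eq utgt_eq gf f by simp
    show "ucomp ?B A = uidt (usrc A)" using ucomp_eq[OF gf(1) f(1)] gf gi_l f usrc_eq uidt_eq s by simp
    show "ucomp A ?B = uidt (utgt A)" using ucomp_eq[OF f(1) gf(1)] gf gi_r f utgt_eq uidt_eq s by simp
  qed
qed

end

theorem mainTheorem1:
  fixes Obj :: "'o set" and Mor :: "'m set"
    and src tgt :: "'m \<Rightarrow> 'o" and cmp :: "'m \<Rightarrow> 'm \<Rightarrow> 'm" and idt :: "'o \<Rightarrow> 'm"
    and lam :: "'m \<Rightarrow> 'i"
  assumes grpd: "is_groupoid Obj Mor src tgt cmp idt"
    and colored: "morphism_colored Mor src tgt cmp lam"
    and invc: "inverse_compatible Mor src tgt cmp idt lam"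
  defines "S1 \<equiv> s1 Mor src tgt cmp lam"
    and "S0 \<equiv> s0 Mor src tgt cmp idt lam"
    and "L0 \<equiv> lam0 idt lam"
  shows "equiv (I1 Mor lam) (rel1 Mor src tgt cmp lam)
       \<and> equiv (I0 Obj idt lam) (rel0 Mor src tgt cmp idt lam)
       \<and> (\<exists>usrc utgt ucomp uidt.
            is_groupoid (Ibar0 Obj Mor src tgt cmp idt lam) (Ibar1 Mor src tgt cmp lam)
                        usrc utgt ucomp uidt
          \<and> (\<forall>f\<in>Mor. usrc (S1 (lam f)) = S0 (L0 (src f))
                     \<and> utgt (S1 (lam f)) = S0 (L0 (tgt f)))
          \<and> (\<forall>f\<in>Mor. \<forall>g\<in>Mor. src f = tgt g \<longrightarrow>
                ucomp (S1 (lam f)) (S1 (lam g)) = S1 (lam (cmp f g)))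
          \<and> (\<forall>a\<in>Ibar1 Mor src tgt cmp lam. \<forall>b\<in>Ibar1 Mor src tgt cmp lam.
                usrc a = utgt b \<longrightarrow>
                (\<exists>f\<in>Mor. \<exists>g\<in>Mor. src f = tgt g \<and> a = S1 (lam f) \<and> b = S1 (lam g))))"
proof -
  interpret L: CG Obj Mor src tgt cmp idt lam using grpd colored invc by unfold_locales
  have A: "\<forall>f\<in>Mor. L.usrc (S1 (lam f)) = S0 (L0 (src f)) \<and> L.utgt (S1 (lam f)) = S0 (L0 (tgt f))"
    using L.usrc_eq L.utgt_eq unfolding S1_def S0_def L0_def by simp
  have B: "\<forall>f\<in>Mor. \<forall>g\<in>Mor. src f = tgt g \<longrightarrow> L.ucomp (S1 (lam f)) (S1 (lam g)) = S1 (lam (cmp f g))"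
    using L.ucomp_eq unfolding S1_def by simp
  have C: "\<forall>a\<in>Ibar1 Mor src tgt cmp lam. \<forall>b\<in>Ibar1 Mor src tgt cmp lam.
                L.usrc a = L.utgt b \<longrightarrow>
                (\<exists>f\<in>Mor. \<exists>g\<in>Mor. src f = tgt g \<and> a = S1 (lam f) \<and> b = S1 (lam g))"
  proof (intro ballI impI)
    fix a b assume a: "a \<in> Ibar1 Mor src tgt cmp lam" and b: "b \<in> Ibar1 Mor src tgt cmp lam"
      and e: "L.usrc a = L.utgt b"
    obtain g where g: "g \<in> Mor" "b = s1 Mor src tgt cmp lam (lam g)" using b by (rule L.Ibar1E)
    obtain f where "f \<in> Mor" "a = s1 Mor src tgt cmp lam (lam f)" "src f = tgt g"
      using L.ex_left[OF a g(1)] e g L.utgt_eq by auto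
    then show "\<exists>f\<in>Mor. \<exists>g\<in>Mor. src f = tgt g \<and> a = S1 (lam f) \<and> b = S1 (lam g)"
      using g unfolding S1_def by blast
  qed
  show ?thesis using L.R1_equiv L.R0_equiv L.U_groupoid A B C by blast
qed

end
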